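(* Let $A$ be a noetherian integral domain which is a $\mathbb{C}$-algebra, and let $a\in A$ be an irreducible element. If $A/aA$ is rigid, then the only locally nilpotent derivation $D$ of $A$ satisfying $D(a)=0$ is the zero derivation.
   Context: A locally nilpotent derivation (LND) of a $\mathbb{C}$-algebra is a $\mathbb{C}$-linear derivation $D$ such that every element is killed by some power of $D$. A ring is rigid if its only LND is zero. *)

theory Defs
  imports Complex_Main "HOL-Algebra.Algebra"
begin

definition C_ring :: "complex ring" where
  "C_ring = \<lparr>carrier = UNIV, monoid.mult = (*), one = 1, ring.zero = 0, ring.add = (+)\<rparr>"

definition C_algebra :: "('a, 'b) ring_scheme \<Rightarrow> (complex \<Rightarrow> 'a) \<Rightarrow> bool" where
  "C_algebra R phi \<longleftrightarrow> cring R \<and> phi \<in> ring_hom C_ring R"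

definition C_derivation :: "('a, 'b) ring_scheme \<Rightarrow> (complex \<Rightarrow> 'a) \<Rightarrow> ('a \<Rightarrow> 'a) \<Rightarrow> bool" where
  "C_derivation R phi D \<longleftrightarrow>
     D \<in> carrier R \<rightarrow> carrier R \<and>
     (\<forall>x\<in>carrier R. \<forall>y\<in>carrier R. D (x \<oplus>\<^bsub>R\<^esub> y) = D x \<oplus>\<^bsub>R\<^esub> D y) \<and>
     (\<forall>c. \<forall>x\<in>carrier R. D (phi c \<otimes>\<^bsub>R\<^esub> x) = phi c \<otimes>\<^bsub>R\<^esub> D x) \<and>
     (\<forall>x\<in>carrier R. \<forall>y\<in>carrier R.
        D (x \<otimes>\<^bsub>R\<^esub> y) = (x \<otimes>\<^bsub>R\<^esub> D y) \<oplus>\<^bsub>R\<^esub> (D x \<otimes>\<^bsub>R\<^esub> y))"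

definition locally_nilpotent :: "('a, 'b) ring_scheme \<Rightarrow> ('a \<Rightarrow> 'a) \<Rightarrow> bool" where
  "locally_nilpotent R D \<longleftrightarrow> (\<forall>x\<in>carrier R. \<exists>n. (D ^^ n) x = \<zero>\<^bsub>R\<^esub>)"

definition LND :: "('a, 'b) ring_scheme \<Rightarrow> (complex \<Rightarrow> 'a) \<Rightarrow> ('a \<Rightarrow> 'a) \<Rightarrow> bool" where
  "LND R phi D \<longleftrightarrow> C_derivation R phi D \<and> locally_nilpotent R D"

definition zero_derivation :: "('a, 'b) ring_scheme \<Rightarrow> ('a \<Rightarrow> 'a) \<Rightarrow> bool" where
  "zero_derivation R D \<longleftrightarrow> (\<forall>x\<in>carrier R. D x = \<zero>\<^bsub>R\<^esub>)"

definition rigid :: "('a, 'b) ring_scheme \<Rightarrow> (complex \<Rightarrow> 'a) \<Rightarrow> bool" where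
  "rigid R phi \<longleftrightarrow> (\<forall>D. LND R phi D \<longrightarrow> zero_derivation R D)"

definition quot_map :: "('a, 'b) ring_scheme \<Rightarrow> (complex \<Rightarrow> 'a) \<Rightarrow> 'a \<Rightarrow> complex \<Rightarrow> 'a set" where
  "quot_map R phi a = (\<lambda>c. (PIdl\<^bsub>R\<^esub> a) +>\<^bsub>R\<^esub> phi c)"

end

theory Submission
  imports Defs
begin

lemma (in cring) L1:
  assumes a: "a \<in> carrier R"
    and phi: "\<And>c. phi c \<in> carrier R"
    and rig: "rigid (R Quot (PIdl a)) (quot_map R phi a)"
    and D: "C_derivation R phi E" and ln: "locally_nilpotent R E" and Ea: "E a = \<zero>"
    and x: "x \<in> carrier R"
  shows "\<exists>y\<in>carrier R. E x = y \<otimes> a"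
proof -
  define I where "I = PIdl a"
  interpret I: ideal I R unfolding I_def by (rule cgenideal_ideal[OF a])
  have hom: "(+>) I \<in> ring_hom R (R Quot I)" by (rule I.rcos_ring_hom)
  have Dp: "E \<in> carrier R \<rightarrow> carrier R"
    "\<forall>x\<in>carrier R. \<forall>y\<in>carrier R. E (x \<oplus> y) = E x \<oplus> E y"
    "\<forall>c. \<forall>x\<in>carrier R. E (phi c \<otimes> x) = phi c \<otimes> E x"
    "\<forall>x\<in>carrier R. \<forall>y\<in>carrier R. E (x \<otimes> y) = (x \<otimes> E y) \<oplus> (E x \<otimes> y)"
    using D unfolding C_derivation_def by auto
  have Ecl: "\<And>x. x \<in> carrier R \<Longrightarrow> E x \<in> carrier R" using Dp(1) by (rule funcset_mem)
  have Eadd: "\<And>x y. x \<in> carrier R \<Longrightarrow> y \<in> carrier R \<Longrightarrow> E (x \<oplus> y) = E x \<oplus> E y"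
    using Dp(2) by simp
  have Ephi: "\<And>c x. x \<in> carrier R \<Longrightarrow> E (phi c \<otimes> x) = phi c \<otimes> E x"
    using Dp(3) by simp
  have Emul: "\<And>x y. x \<in> carrier R \<Longrightarrow> y \<in> carrier R \<Longrightarrow> E (x \<otimes> y) = (x \<otimes> E y) \<oplus> (E x \<otimes> y)"
    using Dp(4) by simp
  have EI: "E h \<in> I" if "h \<in> I" for h
  proof -
    have "\<exists>y. y \<in> carrier R \<and> h = y \<otimes> a" using that unfolding I_def cgenideal_def by blast
    then obtain y where y: "y \<in> carrier R" "h = y \<otimes> a" by blast
    have "E h = E y \<otimes> a" using y Emul[OF y(1) a] Ea Ecl[OF y(1)] a by simp
    thus ?thesis unfolding I_def cgenideal_def using Ecl[OF y(1)] by blast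
  qed
  define F where "F = (\<lambda>S. \<Union> ((\<lambda>x. I +> E x) ` S))"
  have Fk: "F (I +> x) = I +> E x" if x: "x \<in> carrier R" for x
  proof -
    have "I +> E x' = I +> E x" if x': "x' \<in> I +> x" for x'
    proof -
      obtain h where h: "h \<in> I" "x' = h \<oplus> x" using x' unfolding a_r_coset_def' by auto
      have hc: "h \<in> carrier R" using h I.a_subset by blast
      have "E x' = E h \<oplus> E x" using h hc x Eadd by simp
      also have "\<dots> \<in> I +> E x" by (rule a_rcosI[OF EI[OF h(1)] I.a_subset Ecl[OF x]])
      finally show ?thesis by (rule a_repr_independence[symmetric, OF _ Ecl[OF x] I.a_subgroup])
    qed
    moreover have "x \<in> I +> x" by (rule I.a_rcos_self[OF x])
    ultimately show ?thesis unfolding F_def by blast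
  qed
  have carrQ: "carrier (R Quot I) = {I +> x | x. x \<in> carrier R}"
    unfolding FactRing_def A_RCOSETS_def' by auto
  have zeroQ: "\<zero>\<^bsub>R Quot I\<^esub> = I" unfolding FactRing_def by simp
  have addQ: "(I +> x) \<oplus>\<^bsub>R Quot I\<^esub> (I +> y) = I +> (x \<oplus> y)" if "x \<in> carrier R" "y \<in> carrier R" for x y
    using ring_hom_add[OF hom that] by simp
  have mulQ: "(I +> x) \<otimes>\<^bsub>R Quot I\<^esub> (I +> y) = I +> (x \<otimes> y)" if "x \<in> carrier R" "y \<in> carrier R" for x y
    using ring_hom_mult[OF hom that] by simp
  have qm: "quot_map R phi a c = I +> phi c" for c unfolding quot_map_def I_def by simp
  have iter: "(F ^^ n) (I +> x) = I +> (E ^^ n) x \<and> (E ^^ n) x \<in> carrier R" if "x \<in> carrier R" for n x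
    by (induction n) (auto simp: that Fk Ecl)
  have "LND (R Quot I) (quot_map R phi a) F"
    unfolding LND_def C_derivation_def locally_nilpotent_def
  proof (intro conjI ballI allI)
    show "F \<in> carrier (R Quot I) \<rightarrow> carrier (R Quot I)" unfolding carrQ using Fk Ecl by auto
  next
    fix S T assume "S \<in> carrier (R Quot I)" "T \<in> carrier (R Quot I)"
    then obtain x y where xy: "x \<in> carrier R" "y \<in> carrier R" "S = I +> x" "T = I +> y" unfolding carrQ by auto
    show "F (S \<oplus>\<^bsub>R Quot I\<^esub> T) = F S \<oplus>\<^bsub>R Quot I\<^esub> F T"
      using xy by (simp add: addQ Fk Eadd Ecl)
    show "F (S \<otimes>\<^bsub>R Quot I\<^esub> T) = S \<otimes>\<^bsub>R Quot I\<^esub> F T \<oplus>\<^bsub>R Quot I\<^esub> F S \<otimes>\<^bsub>R Quot I\<^esub> T"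
      using xy by (simp add: addQ mulQ Fk Emul Ecl)
  next
    fix c S assume "S \<in> carrier (R Quot I)"
    then obtain x where xy: "x \<in> carrier R" "S = I +> x" unfolding carrQ by auto
    show "F (quot_map R phi a c \<otimes>\<^bsub>R Quot I\<^esub> S) = quot_map R phi a c \<otimes>\<^bsub>R Quot I\<^esub> F S"
      using xy by (simp add: qm mulQ Fk Ephi Ecl phi)
  next
    fix S assume "S \<in> carrier (R Quot I)"
    then obtain x where xy: "x \<in> carrier R" "S = I +> x" unfolding carrQ by auto
    obtain n where "(E ^^ n) x = \<zero>" using ln xy unfolding locally_nilpotent_def by blast
    hence "(F ^^ n) S = I +> \<zero>" using iter[OF xy(1)] xy by simp
    also have "\<dots> = \<zero>\<^bsub>R Quot I\<^esub>" unfolding zeroQ by (rule I.a_rcos_const) simp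
    finally show "\<exists>n. (F ^^ n) S = \<zero>\<^bsub>R Quot I\<^esub>" by blast
  qed
  hence "zero_derivation (R Quot I) F" using rig unfolding rigid_def I_def by blast
  moreover have "I +> x \<in> carrier (R Quot I)" unfolding carrQ using x by blast
  ultimately have "I +> E x = I" using Fk[OF x] zeroQ unfolding zero_derivation_def by auto
  hence "E x \<in> I" using I.a_rcos_self[OF Ecl[OF x]] by simp
  thus ?thesis unfolding I_def cgenideal_def by blast
qed

definition divD :: "('a, 'b) ring_scheme \<Rightarrow> 'a \<Rightarrow> ('a \<Rightarrow> 'a) \<Rightarrow> 'a \<Rightarrow> 'a" where
  "divD R a E = (\<lambda>x. THE y. y \<in> carrier R \<and> E x = y \<otimes>\<^bsub>R\<^esub> a)"

lemma (in domain) L2: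
  assumes a: "a \<in> carrier R" and anz: "a \<noteq> \<zero>"
    and phi: "\<And>c. phi c \<in> carrier R"
    and D: "C_derivation R phi E" and ln: "locally_nilpotent R E" and Ea: "E a = \<zero>"
    and dv: "\<And>x. x \<in> carrier R \<Longrightarrow> \<exists>y\<in>carrier R. E x = y \<otimes> a"
  shows "\<And>x. x \<in> carrier R \<Longrightarrow> divD R a E x \<in> carrier R \<and> E x = divD R a E x \<otimes> a"
    and "LND R phi (divD R a E)" and "divD R a E a = \<zero>"
proof -
  define E' where "E' = divD R a E"
  have Dp: "E \<in> carrier R \<rightarrow> carrier R"
    "\<forall>x\<in>carrier R. \<forall>y\<in>carrier R. E (x \<oplus> y) = E x \<oplus> E y"
    "\<forall>c. \<forall>x\<in>carrier R. E (phi c \<otimes> x) = phi c \<otimes> E x"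
    "\<forall>x\<in>carrier R. \<forall>y\<in>carrier R. E (x \<otimes> y) = (x \<otimes> E y) \<oplus> (E x \<otimes> y)"
    using D unfolding C_derivation_def by auto
  have Ecl: "\<And>x. x \<in> carrier R \<Longrightarrow> E x \<in> carrier R" using Dp(1) by (rule funcset_mem)
  have Eadd: "\<And>x y. x \<in> carrier R \<Longrightarrow> y \<in> carrier R \<Longrightarrow> E (x \<oplus> y) = E x \<oplus> E y"
    using Dp(2) by simp
  have Ephi: "\<And>c x. x \<in> carrier R \<Longrightarrow> E (phi c \<otimes> x) = phi c \<otimes> E x"
    using Dp(3) by simp
  have Emul: "\<And>x y. x \<in> carrier R \<Longrightarrow> y \<in> carrier R \<Longrightarrow> E (x \<otimes> y) = (x \<otimes> E y) \<oplus> (E x \<otimes> y)"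
    using Dp(4) by simp
  have canc: "u = v" if "u \<in> carrier R" "v \<in> carrier R" "u \<otimes> a = v \<otimes> a" for u v
    using m_rcancel[OF anz a that(1,2)] that(3) by simp
  have E'eq: "E' x \<in> carrier R \<and> E x = E' x \<otimes> a" if x: "x \<in> carrier R" for x
  proof -
    obtain y where y: "y \<in> carrier R" "E x = y \<otimes> a" using dv[OF x] by blast
    have "E' x = y" unfolding E'_def divD_def
      by (rule the_equality) (use y canc in auto)
    thus ?thesis using y by simp
  qed
  have E'cl: "\<And>x. x \<in> carrier R \<Longrightarrow> E' x \<in> carrier R" using E'eq by blast
  show "\<And>x. x \<in> carrier R \<Longrightarrow> divD R a E x \<in> carrier R \<and> E x = divD R a E x \<otimes> a"
    using E'eq unfolding E'_def by blast
  have E'a: "E' a = \<zero>"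
  proof -
    have "E' a \<otimes> a = \<zero>" using E'eq[OF a] Ea by simp
    thus ?thesis using integral_iff[OF E'cl[OF a] a] anz by simp
  qed
  thus "divD R a E a = \<zero>" unfolding E'_def .
  have itE: "(E ^^ k) (y \<otimes> a) = (E ^^ k) y \<otimes> a \<and> (E ^^ k) y \<in> carrier R" if y: "y \<in> carrier R" for k y
  proof (induction k)
    case 0 then show ?case using y by simp
  next
    case (Suc k)
    then have c: "(E ^^ k) y \<in> carrier R" by blast
    have "(E ^^ Suc k) (y \<otimes> a) = E ((E ^^ k) y \<otimes> a)" using Suc by simp
    also have "\<dots> = E ((E ^^ k) y) \<otimes> a" using Emul[OF c a] Ea c a Ecl[OF c] by simp
    finally show ?case using Ecl[OF c] by simp
  qed
  have nil: "(E ^^ k) x = \<zero> \<longrightarrow> (E' ^^ k) x = \<zero>" if "x \<in> carrier R" for k x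
    using that
  proof (induction k arbitrary: x)
    case 0 then show ?case by simp
  next
    case (Suc k)
    have "(E ^^ Suc k) x = (E ^^ k) (E x)" by (simp add: funpow_Suc_right del: funpow.simps)
    also have "\<dots> = (E ^^ k) (E' x) \<otimes> a" using E'eq[OF Suc.prems] itE[OF E'cl[OF Suc.prems]] by simp
    finally have eq: "(E ^^ Suc k) x = (E ^^ k) (E' x) \<otimes> a" .
    have cc: "(E ^^ k) (E' x) \<in> carrier R" using itE[OF E'cl[OF Suc.prems]] by blast
    have "(E' ^^ Suc k) x = (E' ^^ k) (E' x)" by (simp add: funpow_Suc_right del: funpow.simps)
    then show ?case using Suc.IH[OF E'cl[OF Suc.prems]] eq integral_iff[OF cc a] anz by simp
  qed
  have "LND R phi E'"
    unfolding LND_def C_derivation_def locally_nilpotent_def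
  proof (intro conjI ballI allI)
    show "E' \<in> carrier R \<rightarrow> carrier R" using E'cl by blast
  next
    fix x y assume x: "x \<in> carrier R" and y: "y \<in> carrier R"
    show "E' (x \<oplus> y) = E' x \<oplus> E' y"
    proof (rule canc)
      show "E' (x \<oplus> y) \<otimes> a = (E' x \<oplus> E' y) \<otimes> a"
        using E'eq[OF add.m_closed[OF x y]] E'eq[OF x] E'eq[OF y] Eadd[OF x y] a
        by (simp add: l_distr)
    qed (use E'cl x y in auto)
    show "E' (x \<otimes> y) = x \<otimes> E' y \<oplus> E' x \<otimes> y"
    proof (rule canc)
      have "E' (x \<otimes> y) \<otimes> a = x \<otimes> (E' y \<otimes> a) \<oplus> (E' x \<otimes> a) \<otimes> y"
        using E'eq[OF m_closed[OF x y]] E'eq[OF x] E'eq[OF y] Emul[OF x y] by simp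
      also have "\<dots> = (x \<otimes> E' y \<oplus> E' x \<otimes> y) \<otimes> a"
        using E'cl[OF x] E'cl[OF y] x y a by (simp add: l_distr r_distr m_ac)
      finally show "E' (x \<otimes> y) \<otimes> a = (x \<otimes> E' y \<oplus> E' x \<otimes> y) \<otimes> a" .
    qed (use E'cl x y in auto)
  next
    fix c x assume x: "x \<in> carrier R"
    show "E' (phi c \<otimes> x) = phi c \<otimes> E' x"
    proof (rule canc)
      show "E' (phi c \<otimes> x) \<otimes> a = (phi c \<otimes> E' x) \<otimes> a"
        using E'eq[OF m_closed[OF phi x]] E'eq[OF x] Ephi[OF x] phi[of c] a E'cl[OF x]
        by (simp add: m_assoc)
    qed (use E'cl x phi in auto)
  next
    fix x assume x: "x \<in> carrier R"
    obtain n where "(E ^^ n) x = \<zero>" using ln x unfolding locally_nilpotent_def by blast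
    thus "\<exists>n. (E' ^^ n) x = \<zero>" using nil[OF x] by blast
  qed
  thus "LND R phi (divD R a E)" unfolding E'_def .
qed

lemma (in noetherian_domain) main:
  assumes a: "a \<in> carrier R" and irr: "ring_irreducible a"
    and phi: "\<And>c. phi c \<in> carrier R"
    and rig: "rigid (R Quot (PIdl a)) (quot_map R phi a)"
    and D: "LND R phi D" and Da: "D a = \<zero>"
  shows "zero_derivation R D"
proof (rule ccontr)
  assume nz: "\<not> zero_derivation R D"
  then obtain x where x: "x \<in> carrier R" "D x \<noteq> \<zero>" unfolding zero_derivation_def by blast
  have anz: "a \<noteq> \<zero>" using irr unfolding ring_irreducible_def by blast
  define Es where "Es n = ((divD R a) ^^ n) D" for n
  have Es_Suc: "Es (Suc n) = divD R a (Es n)" for n unfolding Es_def by simp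
  have P: "LND R phi (Es n) \<and> Es n a = \<zero>" for n
  proof (induction n)
    case 0 then show ?case using D Da unfolding Es_def by simp
  next
    case (Suc n)
    have h: "C_derivation R phi (Es n)" "locally_nilpotent R (Es n)" "Es n a = \<zero>"
      using Suc unfolding LND_def by auto
    have dv: "\<And>x. x \<in> carrier R \<Longrightarrow> \<exists>y\<in>carrier R. Es n x = y \<otimes> a"
      by (rule L1[where E="Es n", OF a phi rig h])
    show ?case unfolding Es_Suc
      using L2(2,3)[where E="Es n" and phi=phi, OF a anz phi h dv] by blast
  qed
  have rel: "Es (Suc n) y \<in> carrier R \<and> Es n y = Es (Suc n) y \<otimes> a" if "y \<in> carrier R" for n y
  proof -
    have h: "C_derivation R phi (Es n)" "locally_nilpotent R (Es n)" "Es n a = \<zero>"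
      using P[of n] unfolding LND_def by auto
    have dv: "\<And>x. x \<in> carrier R \<Longrightarrow> \<exists>y\<in>carrier R. Es n x = y \<otimes> a"
      by (rule L1[where E="Es n", OF a phi rig h])
    show ?thesis unfolding Es_Suc
      using L2(1)[where E="Es n" and phi=phi, OF a anz phi h dv that] by blast
  qed
  define b where "b n = Es n x" for n
  have bc: "b n \<in> carrier R" for n
  proof (cases n)
    case 0
    have "D \<in> carrier R \<rightarrow> carrier R" using D unfolding LND_def C_derivation_def by blast
    hence "D x \<in> carrier R" using x(1) by (rule funcset_mem)
    thus ?thesis unfolding b_def Es_def 0 by simp
  next
    case (Suc m)
    thus ?thesis using rel[OF x(1), of m] unfolding b_def by simp
  qed
  have brel: "b n = b (Suc n) \<otimes> a" for n using rel[OF x(1)] unfolding b_def by blast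
  have bnz: "b n \<noteq> \<zero>" for n
  proof (induction n)
    case 0 then show ?case using x unfolding b_def Es_def by simp
  next
    case (Suc n) then show ?case using brel[of n] bc[of "Suc n"] a by auto
  qed
  have mono1: "PIdl (b n) \<subseteq> PIdl (b (Suc n))" for n
  proof
    fix z assume "z \<in> PIdl (b n)"
    then obtain w where w: "w \<in> carrier R" "z = w \<otimes> b n" unfolding cgenideal_def by blast
    have "z = (w \<otimes> a) \<otimes> b (Suc n)" using w brel[of n] bc[of "Suc n"] a by (simp add: m_ac)
    thus "z \<in> PIdl (b (Suc n))" unfolding cgenideal_def using w a by blast
  qed
  have mono: "m \<le> n \<Longrightarrow> PIdl (b m) \<subseteq> PIdl (b n)" for m n
    by (rule lift_Suc_mono_le[of "\<lambda>n. PIdl (b n)"]) (use mono1 in auto)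
  define C where "C = range (\<lambda>n. PIdl (b n))"
  have sub: "C \<subseteq> {I. ideal I R}" unfolding C_def using cgenideal_ideal bc by auto
  have tot: "\<forall>I\<in>C. \<forall>J\<in>C. I \<subseteq> J \<or> J \<subseteq> I"
  proof (intro ballI)
    fix I J assume "I \<in> C" "J \<in> C"
    then obtain m n where "I = PIdl b m" "J = PIdl b n" unfolding C_def by blast
    then show "I \<subseteq> J \<or> J \<subseteq> I" using mono nat_le_linear[of m n] by blast
  qed
  have ch: "subset.chain {I. ideal I R} C"
    unfolding pred_on.chain_def using sub tot by (auto simp: subset_iff_psubset_eq)
  have "\<Union>C \<in> C" by (rule ideal_chain_is_trivial[OF _ ch]) (simp add: C_def)
  then obtain N where N: "\<Union>C = PIdl (b N)" unfolding C_def by blast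
  have "b (Suc N) \<in> \<Union>C" using cgenideal_self[OF bc[of "Suc N"]] unfolding C_def by blast
  then obtain c where c: "c \<in> carrier R" "b (Suc N) = c \<otimes> b N" unfolding N cgenideal_def by blast
  have "\<one> \<otimes> b (Suc N) = (c \<otimes> a) \<otimes> b (Suc N)"
  proof -
    have "\<one> \<otimes> b (Suc N) = c \<otimes> (b (Suc N) \<otimes> a)" using c brel[of N] bc[of "Suc N"] by simp
    also have "\<dots> = (c \<otimes> a) \<otimes> b (Suc N)" using c(1) bc[of "Suc N"] a by (simp add: m_ac)
    finally show ?thesis .
  qed
  hence ca: "c \<otimes> a = \<one>" using m_rcancel[OF bnz bc[of "Suc N"]] c a by simp
  hence "a \<in> Units R" unfolding Units_def using c a m_comm[OF c(1) a] by (intro CollectI conjI bexI[of _ c]) auto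
  moreover have "a \<notin> Units R" using irr unfolding ring_irreducible_def irreducible_def by blast
  ultimately show False by blast
qed

theorem lemma7p1:
  fixes A :: "('a, 'b) ring_scheme" and phi :: "complex \<Rightarrow> 'a" and a :: 'a
    and D :: "'a \<Rightarrow> 'a"
  assumes "noetherian_domain A"
    and "C_algebra A phi"
    and "a \<in> carrier A"
    and "ring_irreducible\<^bsub>A\<^esub> a"
    and "rigid (A Quot (PIdl\<^bsub>A\<^esub> a)) (quot_map A phi a)"
    and "LND A phi D"
    and "D a = \<zero>\<^bsub>A\<^esub>"
  shows "zero_derivation A D"
proof -
  have hom: "phi \<in> ring_hom C_ring A" using assms(2) unfolding C_algebra_def by blast
  have phi: "\<And>c. phi c \<in> carrier A"
    using ring_hom_closed[OF hom] unfolding C_ring_def by simp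
  show ?thesis
    by (rule noetherian_domain.main[OF assms(1) assms(3) assms(4) phi assms(5) assms(6) assms(7)])
qed

end
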